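(* For the SVIQR system, the point $E^0$ with $S_k=S_k^0=\frac{\Lambda_k(d+\omega+\alpha)}{(d+\omega+\alpha)d+(d+\alpha)\mu_k}$, $V_k=V_k^0=\frac{\Lambda_k\mu_k}{(d+\omega+\alpha)d+(d+\alpha)\mu_k}$, $I_k=Q_k=0$, $R_k=R_k^0=\frac{\alpha}{d}V_k^0$ ($k=1,\dots,n$) is always an equilibrium, and it is the only equilibrium with $\Theta=0$. Define $$R_0=\frac{1}{\langle k\rangle}\sum_{k=1}^n\varphi(k)p(k)\lambda(k)\frac{\Lambda_k\,(d+\omega+\alpha+\delta\mu_k)}{(\gamma+\beta+d)\big[(d+\alpha+\omega)d+(d+\alpha)\mu_k\big]}.$$ Then the SVIQR system has an equilibrium with nonnegative components and $\Theta>0$ (an endemic equilibrium, in which $I_k>0$ for all $k$) if and only if $R_0>1$, and in that case this endemic equilibrium $E^*$ is unique.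
   Context: Fix an integer $n\ge1$ and numbers $p(1),\dots,p(n)>0$ with $\sum_{k=1}^n p(k)=1$; set $\langle k\rangle=\sum_{k=1}^n kp(k)$. Fix constants $b>d>0$ and let $\Phi^*>0$ satisfy $\Phi^*=\frac{1}{\langle k\rangle}\sum_{i=1}^n \frac{i\,p(i)\,b\Phi^*}{d+bi\Phi^*}$. For $k=1,\dots,n$ put $N_k^*=\frac{bk\Phi^*}{d+bk\Phi^*}\in(0,1)$ and $\Lambda_k=bk(1-N_k^* )\Phi^*$ (so $\Lambda_k=dN_k^*>0$). Parameters: $\lambda(k)>0$, $\varphi(k)>0$, $\mu_k>0$ for $k=1,\dots,n$; constants $\alpha,\beta,\gamma,\eta,\omega>0$ and $\delta\in[0,1]$. Write $\xi=\gamma+\beta+d$. For functions $I_1(t),\dots,I_n(t)$ set $\Theta(t)=\frac{1}{\langle k\rangle}\sum_{i=1}^n\varphi(i)p(i)I_i(t)$. The SVIQR system is, for $k=1,\dots,n$: $S_k'=\Lambda_k-\lambda(k)S_k\Theta+\omega V_k-(\mu_k+d)S_k$, $V_k'=\mu_kS_k-\delta\lambda(k)V_k\Theta-(d+\omega+\alpha)V_k$, $I_k'=\lambda(k)S_k\Theta+\delta\lambda(k)V_k\Theta-(\gamma+\beta+d)I_k$, $Q_k'=\beta I_k-(\eta+d)Q_k$, $R_k'=\gamma I_k+\eta Q_k+\alpha V_k-dR_k$. An equilibrium is a point where all these right-hand sides vanish. *)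

theory Defs
  imports Complex_Main
begin

definition kmean :: "nat \<Rightarrow> (nat \<Rightarrow> real) \<Rightarrow> real" where
  "kmean n p = (\<Sum>k=1..n. real k * p k)"

definition Theta :: "nat \<Rightarrow> (nat \<Rightarrow> real) \<Rightarrow> (nat \<Rightarrow> real) \<Rightarrow> (nat \<Rightarrow> real) \<Rightarrow> real" where
  "Theta n p phi I = (1 / kmean n p) * (\<Sum>i=1..n. phi i * p i * I i)"

definition Nstar :: "real \<Rightarrow> real \<Rightarrow> real \<Rightarrow> nat \<Rightarrow> real" where
  "Nstar b d Phi k = b * real k * Phi / (d + b * real k * Phi)"

definition Lam :: "real \<Rightarrow> real \<Rightarrow> real \<Rightarrow> nat \<Rightarrow> real" where
  "Lam b d Phi k = b * real k * (1 - Nstar b d Phi k) * Phi"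

definition sviqr_equilibrium ::
  "nat \<Rightarrow> (nat \<Rightarrow> real) \<Rightarrow> real \<Rightarrow> real \<Rightarrow> real \<Rightarrow>
   (nat \<Rightarrow> real) \<Rightarrow> (nat \<Rightarrow> real) \<Rightarrow> (nat \<Rightarrow> real) \<Rightarrow>
   real \<Rightarrow> real \<Rightarrow> real \<Rightarrow> real \<Rightarrow> real \<Rightarrow> real \<Rightarrow>
   (nat \<Rightarrow> real) \<Rightarrow> (nat \<Rightarrow> real) \<Rightarrow> (nat \<Rightarrow> real) \<Rightarrow> (nat \<Rightarrow> real) \<Rightarrow> (nat \<Rightarrow> real) \<Rightarrow> bool"
where
  "sviqr_equilibrium n p b d Phi lam phi mu alpha beta gamma eta omega delta S V I Q R \<longleftrightarrow>
     (\<forall>k\<in>{1..n}.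
        Lam b d Phi k - lam k * S k * Theta n p phi I + omega * V k - (mu k + d) * S k = 0 \<and>
        mu k * S k - delta * lam k * V k * Theta n p phi I - (d + omega + alpha) * V k = 0 \<and>
        lam k * S k * Theta n p phi I + delta * lam k * V k * Theta n p phi I
          - (gamma + beta + d) * I k = 0 \<and>
        beta * I k - (eta + d) * Q k = 0 \<and>
        gamma * I k + eta * Q k + alpha * V k - d * R k = 0)"

definition R0 ::
  "nat \<Rightarrow> (nat \<Rightarrow> real) \<Rightarrow> real \<Rightarrow> real \<Rightarrow> real \<Rightarrow>
   (nat \<Rightarrow> real) \<Rightarrow> (nat \<Rightarrow> real) \<Rightarrow> (nat \<Rightarrow> real) \<Rightarrow>
   real \<Rightarrow> real \<Rightarrow> real \<Rightarrow> real \<Rightarrow> real \<Rightarrow> real"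
where
  "R0 n p b d Phi lam phi mu alpha beta gamma omega delta =
     (1 / kmean n p) * (\<Sum>k=1..n. phi k * p k * lam k *
        (Lam b d Phi k * (d + omega + alpha + delta * mu k)) /
        ((gamma + beta + d) * ((d + alpha + omega) * d + (d + alpha) * mu k)))"

definition S0 :: "real \<Rightarrow> real \<Rightarrow> real \<Rightarrow> (nat \<Rightarrow> real) \<Rightarrow> real \<Rightarrow> real \<Rightarrow> nat \<Rightarrow> real" where
  "S0 b d Phi mu alpha omega k =
     Lam b d Phi k * (d + omega + alpha) / ((d + omega + alpha) * d + (d + alpha) * mu k)"

definition V0 :: "real \<Rightarrow> real \<Rightarrow> real \<Rightarrow> (nat \<Rightarrow> real) \<Rightarrow> real \<Rightarrow> real \<Rightarrow> nat \<Rightarrow> real" where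
  "V0 b d Phi mu alpha omega k =
     Lam b d Phi k * mu k / ((d + omega + alpha) * d + (d + alpha) * mu k)"

definition R0comp :: "real \<Rightarrow> real \<Rightarrow> real \<Rightarrow> (nat \<Rightarrow> real) \<Rightarrow> real \<Rightarrow> real \<Rightarrow> nat \<Rightarrow> real" where
  "R0comp b d Phi mu alpha omega k = alpha / d * V0 b d Phi mu alpha omega k"

end

theory Submission
  imports Defs
begin


lemma D_pos:
  fixes x mk d om al de :: real
  assumes "x \<ge> 0" "mk > 0" "d > 0" "om > 0" "al > 0" "de \<ge> 0"
  shows "(x + mk + d) * (de * x + (d+om+al)) - om * mk > 0"
proof -
  have "(x + mk + d) * (de * x + (d+om+al)) - om * mk
      = d*(d+om+al) + mk*(d+al) + x*(de*x + (d+om+al) + de*(mk+d))"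
    by (simp add: algebra_simps)
  moreover have "x*(de*x + (d+om+al) + de*(mk+d)) \<ge> 0" using assms by simp
  moreover have "d*(d+om+al) + mk*(d+al) > 0" using assms by (simp add: add_pos_pos)
  ultimately show ?thesis by linarith
qed

lemma g_decr:
  fixes x y mk d om al de :: real
  assumes "0 \<le> x" "x < y" "mk > 0" "d > 0" "om > 0" "al > 0" "de \<ge> 0"
  shows "(de*y + (d+om+al) + de*mk) / ((y + mk + d) * (de * y + (d+om+al)) - om * mk)
       < (de*x + (d+om+al) + de*mk) / ((x + mk + d) * (de * x + (d+om+al)) - om * mk)"
proof -
  define A where "A = d+om+al"
  define a where "a = A + de*mk"
  define B where "B = A + de*(mk+d)"
  define E where "E = (mk+d)*A - om*mk"
  have Dx: "(x + mk + d) * (de * x + A) - om * mk > 0" using D_pos assms A_def by auto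
  have Dy: "(y + mk + d) * (de * y + A) - om * mk > 0" using D_pos assms A_def by auto
  have key: "(de*x + a) * ((y + mk + d) * (de * y + A) - om * mk)
          - (de*y + a) * ((x + mk + d) * (de * x + A) - om * mk)
          = (y - x) * (de*de*x*y + a*de*(x+y) + (A*A + de*mk*A + de*de*mk*mk + de*de*mk*d + de*om*mk))"
    unfolding a_def by (simp add: algebra_simps)
  have pos2: "de*de*x*y + a*de*(x+y) + (A*A + de*mk*A + de*de*mk*mk + de*de*mk*d + de*om*mk) > 0"
  proof -
    have "A > 0" using assms A_def by simp
    hence "A*A > 0" by simp
    moreover have "de*de*x*y \<ge> 0" using assms by simp
    moreover have "a*de*(x+y) \<ge> 0" using assms \<open>A>0\<close> a_def by simp
    moreover have "de*mk*A \<ge> 0" "de*de*mk*mk \<ge> 0" "de*de*mk*d \<ge> 0" "de*om*mk \<ge> 0"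
      using assms \<open>A>0\<close> by simp_all
    ultimately show ?thesis by linarith
  qed
  have "(de*y + a) * ((x + mk + d) * (de * x + A) - om * mk)
      < (de*x + a) * ((y + mk + d) * (de * y + A) - om * mk)"
    using key pos2 assms by (smt (verit) mult_pos_pos)
  thus ?thesis using Dx Dy unfolding a_def A_def by (simp add: divide_simps add.assoc)
qed

lemma alg_back:
  fixes S V L lt mk d om al de D den :: real
  assumes "D \<noteq> 0" "S*D = L*den" "V*D = L*mk" "D = (lt + mk + d)*den - om*mk"
    "den = de*lt + (d+om+al)"
  shows "L - lt*S + om*V - (mk+d)*S = 0" "mk*S - de*lt*V - (d+om+al)*V = 0"
proof -
  have "(L - lt*S + om*V - (mk+d)*S)*D = L*D - lt*(S*D) + om*(V*D) - (mk+d)*(S*D)"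
    by (simp add: algebra_simps)
  also have "\<dots> = L*D - lt*(L*den) + om*(L*mk) - (mk+d)*(L*den)" by (simp only: assms(2,3))
  also have "\<dots> = L*(D - ((lt + mk + d)*den - om*mk))" by (simp add: algebra_simps)
  also have "\<dots> = 0" using assms(4) by simp
  finally show "L - lt*S + om*V - (mk+d)*S = 0" using assms(1) by simp
  have "(mk*S - de*lt*V - (d+om+al)*V)*D = mk*(S*D) - de*lt*(V*D) - (d+om+al)*(V*D)"
    by (simp add: algebra_simps)
  also have "\<dots> = mk*(L*den) - de*lt*(L*mk) - (d+om+al)*(L*mk)" by (simp only: assms(2,3))
  also have "\<dots> = L*mk*(den - (de*lt + (d+om+al)))" by (simp add: algebra_simps)
  also have "\<dots> = 0" using assms(5) by simp
  finally show "mk*S - de*lt*V - (d+om+al)*V = 0" using assms(1) by simp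
qed

lemma alg_fwd:
  fixes S V L lt mk d om al de D den :: real
  assumes "D \<noteq> 0" "den \<noteq> 0" "D = (lt + mk + d)*den - om*mk"
    "den = de*lt + (d+om+al)"
    "L - lt*S + om*V - (mk+d)*S = 0" "mk*S - de*lt*V - (d+om+al)*V = 0"
  shows "S = L*den/D" "V = L*mk/D"
proof -
  have "S*D - L*den = -den*(L - lt*S + om*V - (mk+d)*S) - om*(mk*S - de*lt*V - (d+om+al)*V)"
    using assms(3,4) by (simp add: algebra_simps)
  hence SD: "S*D = L*den" using assms(5,6) by simp
  thus "S = L*den/D" using assms(1) by (simp add: field_simps)
  have "V*den = mk*S" using assms(4,6) by (simp add: algebra_simps)
  hence "V*den*D = mk*L*den" using SD by (metis mult.assoc mult.commute)
  hence "V*D = mk*L" using assms(2) by (metis mult.commute mult_left_cancel mult.assoc)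
  thus "V = L*mk/D" using assms(1) by (simp add: field_simps)
qed

locale sv =
  fixes n :: nat and p :: "nat \<Rightarrow> real" and b d Phi :: real
    and lam phi mu :: "nat \<Rightarrow> real"
    and alpha beta gamma eta omega delta :: real
  assumes hn: "n \<ge> 1"
    and hp: "\<forall>k\<in>{1..n}. p k > 0"
    and hbd: "b > d" and hd: "d > 0"
    and hPhi: "Phi > 0"
    and hlam: "\<forall>k\<in>{1..n}. lam k > 0"
    and hphi: "\<forall>k\<in>{1..n}. phi k > 0"
    and hmu: "\<forall>k\<in>{1..n}. mu k > 0"
    and halpha: "alpha > 0" and hbeta: "beta > 0" and hgamma: "gamma > 0"
    and heta: "eta > 0" and homega: "omega > 0"
    and hdelta: "0 \<le> delta" "delta \<le> 1"
begin

definition K :: "real" where "K = kmean n p"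
definition A :: "real" where "A = d + omega + alpha"
definition xi :: "real" where "xi = gamma + beta + d"
definition L :: "nat \<Rightarrow> real" where "L k = Lam b d Phi k"
definition den1 :: "real \<Rightarrow> nat \<Rightarrow> real" where "den1 \<theta> k = delta * lam k * \<theta> + A"
definition Dk :: "real \<Rightarrow> nat \<Rightarrow> real" where "Dk \<theta> k = (lam k * \<theta> + mu k + d) * den1 \<theta> k - omega * mu k"
definition Sf :: "real \<Rightarrow> nat \<Rightarrow> real" where "Sf \<theta> k = L k * den1 \<theta> k / Dk \<theta> k"
definition Vf :: "real \<Rightarrow> nat \<Rightarrow> real" where "Vf \<theta> k = L k * mu k / Dk \<theta> k"
definition hf :: "real \<Rightarrow> nat \<Rightarrow> real" where "hf \<theta> k = L k * (den1 \<theta> k + delta * mu k) / Dk \<theta> k"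
definition If :: "real \<Rightarrow> nat \<Rightarrow> real" where "If \<theta> k = lam k * \<theta> * hf \<theta> k / xi"
definition Qf :: "real \<Rightarrow> nat \<Rightarrow> real" where "Qf \<theta> k = beta * If \<theta> k / (eta + d)"
definition Rf :: "real \<Rightarrow> nat \<Rightarrow> real" where "Rf \<theta> k = (gamma * If \<theta> k + eta * Qf \<theta> k + alpha * Vf \<theta> k) / d"
definition F :: "real \<Rightarrow> real" where "F \<theta> = (1 / K) * (\<Sum>k=1..n. phi k * p k * lam k * hf \<theta> k / xi)"

lemma K_pos: "K > 0"
proof -
  have "(\<Sum>k=1..n. real k * p k) > 0"
    by (rule sum_pos) (use hn hp in auto)
  thus ?thesis unfolding K_def kmean_def .
qed

lemma A_pos: "A > 0" and xi_pos: "xi > 0"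
  using hd homega halpha hgamma hbeta unfolding A_def xi_def by auto

lemma L_pos: assumes "k \<in> {1..n}" shows "L k > 0"
proof -
  have k: "real k \<ge> 1" using assms by auto
  have b: "b > 0" using hbd hd by linarith
  have bk: "b * real k * Phi > 0" using k b hPhi by simp
  have "1 - Nstar b d Phi k = d / (d + b * real k * Phi)"
    unfolding Nstar_def using bk hd by (simp add: field_simps)
  also have "\<dots> > 0" using bk hd by simp
  finally have "(b * real k * Phi) * (1 - Nstar b d Phi k) > 0" using bk by simp
  thus ?thesis unfolding L_def Lam_def by (simp add: algebra_simps)
qed

lemma den1_pos: assumes "k \<in> {1..n}" "\<theta> \<ge> 0" shows "den1 \<theta> k > 0"
proof -
  have "lam k > 0" using assms hlam by auto
  hence "delta * lam k * \<theta> \<ge> 0" using assms hdelta by simp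
  thus ?thesis unfolding den1_def using A_pos by linarith
qed

lemma Dk_pos: assumes "k \<in> {1..n}" "\<theta> \<ge> 0" shows "Dk \<theta> k > 0"
proof -
  have "lam k > 0" using assms hlam by auto
  hence "lam k * \<theta> \<ge> 0" using assms by simp
  from D_pos[OF this, of "mu k" d omega alpha delta] hmu assms hd homega halpha hdelta
  show ?thesis unfolding Dk_def den1_def A_def by (simp add: mult.assoc)
qed

lemma hf_decr: assumes "k \<in> {1..n}" "0 \<le> s" "s < t" shows "hf t k < hf s k"
proof -
  have l: "lam k > 0" using hlam assms by auto
  have "lam k * s < lam k * t" using l assms by simp
  from g_decr[OF _ this, of "mu k" d omega alpha delta] l assms hmu hd homega halpha hdelta
  have "(delta * (lam k * t) + (d + omega + alpha) + delta * mu k) /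
    ((lam k * t + mu k + d) * (delta * (lam k * t) + (d + omega + alpha)) - omega * mu k)
    < (delta * (lam k * s) + (d + omega + alpha) + delta * mu k) /
      ((lam k * s + mu k + d) * (delta * (lam k * s) + (d + omega + alpha)) - omega * mu k)"
    by simp
  hence "(den1 t k + delta * mu k) / Dk t k < (den1 s k + delta * mu k) / Dk s k"
    unfolding den1_def Dk_def A_def by (simp add: mult.assoc)
  from mult_strict_left_mono[OF this L_pos[OF assms(1)]]
  show ?thesis unfolding hf_def by (simp add: times_divide_eq_right)
qed

lemma F_decr: assumes "0 \<le> s" "s < t" shows "F t < F s"
proof -
  have "(\<Sum>k=1..n. phi k * p k * lam k * hf t k / xi) < (\<Sum>k=1..n. phi k * p k * lam k * hf s k / xi)"
  proof (rule sum_strict_mono)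
    fix k assume k: "k \<in> {1..n}"
    have c: "phi k * p k * lam k > 0" using k hphi hp hlam by simp
    show "phi k * p k * lam k * hf t k / xi < phi k * p k * lam k * hf s k / xi"
      using mult_strict_left_mono[OF hf_decr[OF k assms] c] xi_pos by (simp add: divide_strict_right_mono)
  qed (use hn in auto)
  thus ?thesis unfolding F_def using K_pos by (simp add: divide_strict_right_mono)
qed

lemma F_inj: assumes "0 \<le> s" "0 \<le> t" "F s = F t" shows "s = t"
  using F_decr[of s t] F_decr[of t s] assms by (cases "s < t"; cases "t < s") auto

lemma F_cont: assumes "\<theta> \<ge> 0" shows "isCont F \<theta>"
proof -
  have "isCont (\<lambda>\<theta>. hf \<theta> k) \<theta>" if k: "k \<in> {1..n}" for k
  proof -
    have "Dk \<theta> k \<noteq> 0" using Dk_pos[OF k assms] by simp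
    thus ?thesis unfolding hf_def Dk_def den1_def
      by (intro continuous_intros) auto
  qed
  hence "isCont (\<lambda>\<theta>. \<Sum>k=1..n. phi k * p k * lam k * hf \<theta> k / xi) \<theta>"
    using xi_pos by (intro isCont_sum ballI continuous_intros) auto
  hence "isCont (\<lambda>\<theta>. (1/K) * (\<Sum>k=1..n. phi k * p k * lam k * hf \<theta> k / xi)) \<theta>"
    using isCont_mult[OF continuous_const] by blast
  thus ?thesis unfolding F_def[abs_def] .
qed

lemma hf_bound: assumes k: "k \<in> {1..n}" and t: "\<theta> > 0"
  shows "hf \<theta> k * \<theta> \<le> L k * (1 + mu k / A) / lam k"
proof -
  have l: "lam k > 0" and m: "mu k > 0" using k hlam hmu by auto
  have d1: "den1 \<theta> k \<ge> A" unfolding den1_def using l t hdelta by simp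
  have D: "Dk \<theta> k > 0" using Dk_pos k t by simp
  have x: "lam k * \<theta> > 0" using l t by simp
  have "Dk \<theta> k = lam k * \<theta> * den1 \<theta> k + ((mu k + d) * den1 \<theta> k - omega * mu k)"
    unfolding Dk_def by (simp add: algebra_simps)
  moreover have "(mu k + d) * den1 \<theta> k - omega * mu k \<ge> 0"
  proof -
    have "(mu k + d) * den1 \<theta> k \<ge> (mu k + d) * A" using d1 m hd by (intro mult_left_mono) auto
    moreover have "(mu k + d) * A - omega * mu k = d*A + mu k*(d+alpha)" unfolding A_def by (simp add: algebra_simps)
    moreover have "d*A + mu k*(d+alpha) \<ge> 0" using A_pos hd m halpha by simp
    ultimately show ?thesis by linarith
  qed
  ultimately have DD: "Dk \<theta> k \<ge> lam k * \<theta> * den1 \<theta> k" by linarith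
  have key: "lam k * \<theta> * (den1 \<theta> k + delta * mu k) \<le> (1 + mu k / A) * Dk \<theta> k"
  proof -
    have "(1 + mu k / A) * Dk \<theta> k \<ge> (1 + mu k / A) * (lam k * \<theta> * den1 \<theta> k)"
      using DD A_pos m by (intro mult_left_mono) auto
    moreover have "(1 + mu k / A) * (lam k * \<theta> * den1 \<theta> k) = lam k * \<theta> * den1 \<theta> k + lam k * \<theta> * mu k * (den1 \<theta> k / A)"
      using A_pos by (simp add: field_simps)
    moreover have "den1 \<theta> k / A \<ge> 1" using d1 A_pos by simp
    moreover have "lam k * \<theta> * mu k * (den1 \<theta> k / A) \<ge> lam k * \<theta> * mu k * 1"
      using \<open>den1 \<theta> k / A \<ge> 1\<close> x m by (intro mult_left_mono) auto
    moreover have "lam k * \<theta> * mu k \<ge> lam k * \<theta> * (delta * mu k)"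
      using x m hdelta by (intro mult_left_mono) auto
    ultimately show ?thesis by (simp add: algebra_simps)
  qed
  have Lp: "L k > 0" using L_pos k by simp
  have "hf \<theta> k * \<theta> = L k * (lam k * \<theta> * (den1 \<theta> k + delta * mu k)) / (lam k * Dk \<theta> k)"
    unfolding hf_def using l D by (simp add: field_simps)
  also have "\<dots> \<le> L k * ((1 + mu k / A) * Dk \<theta> k) / (lam k * Dk \<theta> k)"
    using key Lp l D by (intro divide_right_mono mult_left_mono) auto
  also have "\<dots> = L k * (1 + mu k / A) / lam k" using D l by (simp add: field_simps)
  finally show ?thesis .
qed

lemma F_small: "\<exists>T>0. F T < 1"
proof -
  define C where "C = (1/K) * (\<Sum>k=1..n. phi k * p k * lam k * (L k * (1 + mu k / A) / lam k) / xi)"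
  have "\<forall>k\<in>{1..n}. phi k * p k * lam k * (L k * (1 + mu k / A) / lam k) / xi \<ge> 0"
  proof
    fix k assume k: "k \<in> {1..n}"
    have "phi k > 0" "p k > 0" "lam k > 0" "mu k > 0" "L k > 0" using k hphi hp hlam hmu L_pos by auto
    hence "1 + mu k / A > 0" using A_pos by (simp add: add_pos_pos)
    thus "phi k * p k * lam k * (L k * (1 + mu k / A) / lam k) / xi \<ge> 0"
      using \<open>phi k > 0\<close> \<open>p k > 0\<close> \<open>lam k > 0\<close> \<open>L k > 0\<close> xi_pos by simp
  qed
  hence "(\<Sum>k=1..n. phi k * p k * lam k * (L k * (1 + mu k / A) / lam k) / xi) \<ge> 0"
    by (intro sum_nonneg) auto
  hence C0: "C \<ge> 0" unfolding C_def using K_pos by simp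
  define T where "T = C + 1"
  have T: "T > 0" using C0 T_def by simp
  have "F T * T = (1/K) * (\<Sum>k=1..n. phi k * p k * lam k * (hf T k * T) / xi)"
    unfolding F_def by (simp add: sum_distrib_right sum_divide_distrib mult.assoc)
  also have "\<dots> \<le> C" unfolding C_def
  proof (rule mult_left_mono, rule sum_mono, rule divide_right_mono)
    fix k assume k: "k \<in> {1..n}"
    show "phi k * p k * lam k * (hf T k * T) \<le> phi k * p k * lam k * (L k * (1 + mu k / A) / lam k)"
    proof (rule mult_left_mono[OF hf_bound[OF k T]])
      have "phi k > 0" "p k > 0" "lam k > 0" using k hphi hp hlam by auto
      thus "0 \<le> phi k * p k * lam k" by simp
    qed
  qed (use K_pos xi_pos in auto)
  finally have "F T * T \<le> C" .
  hence "F T * T < T" using T_def by simp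
  thus ?thesis using T by (intro exI[of _ T]) simp
qed


lemma hf_eq: "hf \<theta> k = Sf \<theta> k + delta * Vf \<theta> k"
  unfolding hf_def Sf_def Vf_def by (simp add: add_divide_distrib algebra_simps)

lemma Theta_If:
  assumes "\<forall>k\<in>{1..n}. I k = If \<theta> k"
  shows "Theta n p phi I = \<theta> * F \<theta>"
proof -
  have "Theta n p phi I = (1 / K) * (\<Sum>i=1..n. phi i * p i * If \<theta> i)"
    unfolding Theta_def K_def using assms by (intro arg_cong[where f="\<lambda>x. _ * x"] sum.cong) auto
  also have "\<dots> = \<theta> * F \<theta>"
    unfolding F_def If_def by (simp add: sum_distrib_left sum_divide_distrib algebra_simps)
  finally show ?thesis .
qed

lemma eq_char:
  assumes eq: "sviqr_equilibrium n p b d Phi lam phi mu alpha beta gamma eta omega delta S V I Q R"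
    and th: "Theta n p phi I = \<theta>" "\<theta> \<ge> 0" and k: "k \<in> {1..n}"
  shows "S k = Sf \<theta> k \<and> V k = Vf \<theta> k \<and> I k = If \<theta> k \<and> Q k = Qf \<theta> k \<and> R k = Rf \<theta> k"
proof -
  from eq k th(1) have
    e1: "Lam b d Phi k - lam k * S k * \<theta> + omega * V k - (mu k + d) * S k = 0" and
    e2: "mu k * S k - delta * lam k * V k * \<theta> - (d + omega + alpha) * V k = 0" and
    e3: "lam k * S k * \<theta> + delta * lam k * V k * \<theta> - (gamma + beta + d) * I k = 0" and
    e4: "beta * I k - (eta + d) * Q k = 0" and
    e5: "gamma * I k + eta * Q k + alpha * V k - d * R k = 0"
    unfolding sviqr_equilibrium_def by auto
  have D: "Dk \<theta> k \<noteq> 0" using Dk_pos[OF k th(2)] by simp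
  have dn: "den1 \<theta> k \<noteq> 0" using den1_pos[OF k th(2)] by simp
  have e1': "L k - (lam k * \<theta>) * S k + omega * V k - (mu k + d) * S k = 0"
    using e1 unfolding L_def by (simp add: algebra_simps)
  have e2': "mu k * S k - delta * (lam k * \<theta>) * V k - (d + omega + alpha) * V k = 0"
    using e2 by (simp add: algebra_simps)
  note r = alg_fwd[OF D dn _ _ e1' e2']
  have SS: "S k = Sf \<theta> k" and VV: "V k = Vf \<theta> k"
    using r unfolding Sf_def Vf_def Dk_def den1_def A_def by (auto simp: algebra_simps)
  have "xi * I k = lam k * \<theta> * (S k + delta * V k)" using e3 unfolding xi_def by (simp add: algebra_simps)
  hence II: "I k = If \<theta> k" unfolding If_def hf_eq SS[symmetric] VV[symmetric] using xi_pos
    by (simp add: field_simps)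
  have QQ: "Q k = Qf \<theta> k" unfolding Qf_def II[symmetric] using e4 hd heta by (simp add: field_simps)
  have RR: "R k = Rf \<theta> k" unfolding Rf_def II[symmetric] QQ[symmetric] VV[symmetric]
    using e5 hd by (simp add: field_simps)
  show ?thesis using SS VV II QQ RR by simp
qed

lemma eq_F:
  assumes eq: "sviqr_equilibrium n p b d Phi lam phi mu alpha beta gamma eta omega delta S V I Q R"
    and th: "Theta n p phi I = \<theta>" "\<theta> > 0"
  shows "F \<theta> = 1"
proof -
  have "\<forall>k\<in>{1..n}. I k = If \<theta> k" using eq_char[OF eq th(1)] th(2) by auto
  from Theta_If[OF this] th show ?thesis by simp
qed

lemma construct:
  assumes th: "\<theta> \<ge> 0" "\<theta> * F \<theta> = \<theta>"
    and ag: "\<forall>k\<in>{1..n}. S k = Sf \<theta> k \<and> V k = Vf \<theta> k \<and> I k = If \<theta> k \<and> Q k = Qf \<theta> k \<and> R k = Rf \<theta> k"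
  shows "sviqr_equilibrium n p b d Phi lam phi mu alpha beta gamma eta omega delta S V I Q R
         \<and> Theta n p phi I = \<theta>"
proof -
  have TH: "Theta n p phi I = \<theta>" using Theta_If[of I \<theta>] ag th by auto
  have "\<forall>k\<in>{1..n}.
        Lam b d Phi k - lam k * S k * Theta n p phi I + omega * V k - (mu k + d) * S k = 0 \<and>
        mu k * S k - delta * lam k * V k * Theta n p phi I - (d + omega + alpha) * V k = 0 \<and>
        lam k * S k * Theta n p phi I + delta * lam k * V k * Theta n p phi I
          - (gamma + beta + d) * I k = 0 \<and>
        beta * I k - (eta + d) * Q k = 0 \<and>
        gamma * I k + eta * Q k + alpha * V k - d * R k = 0"
  proof
    fix k assume k: "k \<in> {1..n}"
    have D: "Dk \<theta> k \<noteq> 0" using Dk_pos[OF k th(1)] by simp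
    have SD: "Sf \<theta> k * Dk \<theta> k = L k * den1 \<theta> k" unfolding Sf_def using D by simp
    have VD: "Vf \<theta> k * Dk \<theta> k = L k * mu k" unfolding Vf_def using D by simp
    note r = alg_back[OF D SD VD, of "lam k * \<theta>" d omega delta alpha]
    have r1: "L k - lam k * \<theta> * Sf \<theta> k + omega * Vf \<theta> k - (mu k + d) * Sf \<theta> k = 0"
     and r2: "mu k * Sf \<theta> k - delta * (lam k * \<theta>) * Vf \<theta> k - (d + omega + alpha) * Vf \<theta> k = 0"
      using r unfolding Dk_def den1_def A_def by (auto simp: algebra_simps)
    have ak: "S k = Sf \<theta> k" "V k = Vf \<theta> k" "I k = If \<theta> k" "Q k = Qf \<theta> k" "R k = Rf \<theta> k"
      using ag k by auto
    show "Lam b d Phi k - lam k * S k * Theta n p phi I + omega * V k - (mu k + d) * S k = 0 \<and>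
        mu k * S k - delta * lam k * V k * Theta n p phi I - (d + omega + alpha) * V k = 0 \<and>
        lam k * S k * Theta n p phi I + delta * lam k * V k * Theta n p phi I
          - (gamma + beta + d) * I k = 0 \<and>
        beta * I k - (eta + d) * Q k = 0 \<and>
        gamma * I k + eta * Q k + alpha * V k - d * R k = 0"
      unfolding TH ak
    proof (intro conjI)
      show "Lam b d Phi k - lam k * Sf \<theta> k * \<theta> + omega * Vf \<theta> k - (mu k + d) * Sf \<theta> k = 0"
        using r1 unfolding L_def by (simp add: algebra_simps)
      show "mu k * Sf \<theta> k - delta * lam k * Vf \<theta> k * \<theta> - (d + omega + alpha) * Vf \<theta> k = 0"
        using r2 by (simp add: algebra_simps)
      show "lam k * Sf \<theta> k * \<theta> + delta * lam k * Vf \<theta> k * \<theta> - (gamma + beta + d) * If \<theta> k = 0"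
        unfolding If_def hf_eq xi_def using xi_pos unfolding xi_def by (simp add: field_simps)
      show "beta * If \<theta> k - (eta + d) * Qf \<theta> k = 0"
        unfolding Qf_def using hd heta by (simp add: field_simps)
      show "gamma * If \<theta> k + eta * Qf \<theta> k + alpha * Vf \<theta> k - d * Rf \<theta> k = 0"
        unfolding Rf_def using hd by (simp add: field_simps)
    qed
  qed
  thus ?thesis unfolding sviqr_equilibrium_def using TH by simp
qed

lemma nonneg:
  assumes k: "k \<in> {1..n}" and th: "\<theta> \<ge> 0"
  shows "Sf \<theta> k \<ge> 0" "Vf \<theta> k \<ge> 0" "If \<theta> k \<ge> 0" "Qf \<theta> k \<ge> 0" "Rf \<theta> k \<ge> 0"
    and "\<theta> > 0 \<Longrightarrow> If \<theta> k > 0"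
proof -
  have D: "Dk \<theta> k > 0" using Dk_pos[OF k th] .
  have dn: "den1 \<theta> k > 0" using den1_pos[OF k th] .
  have Lp: "L k > 0" using L_pos[OF k] .
  have m: "mu k > 0" and l: "lam k > 0" using k hmu hlam by auto
  show S: "Sf \<theta> k \<ge> 0" unfolding Sf_def using D dn Lp by simp
  show V: "Vf \<theta> k \<ge> 0" unfolding Vf_def using D m Lp by simp
  have h: "hf \<theta> k > 0" unfolding hf_def using D dn Lp m hdelta
    by (intro divide_pos_pos mult_pos_pos add_pos_nonneg) auto
  show I: "If \<theta> k \<ge> 0" unfolding If_def using h l th xi_pos by simp
  show Q: "Qf \<theta> k \<ge> 0" unfolding Qf_def using I hbeta heta hd by simp
  show "Rf \<theta> k \<ge> 0" unfolding Rf_def using I Q V hgamma heta halpha hd by simp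
  show "\<theta> > 0 \<Longrightarrow> If \<theta> k > 0" unfolding If_def using h l xi_pos by simp
qed

lemma Dk0: "Dk 0 k = (d + omega + alpha) * d + (d + alpha) * mu k"
  unfolding Dk_def den1_def A_def by (simp add: algebra_simps)

lemma at0: "Sf 0 k = S0 b d Phi mu alpha omega k" "Vf 0 k = V0 b d Phi mu alpha omega k"
  "If 0 k = 0" "Qf 0 k = 0" "Rf 0 k = R0comp b d Phi mu alpha omega k"
  unfolding Sf_def Vf_def If_def Qf_def Rf_def S0_def V0_def R0comp_def Dk0 L_def
  by (simp_all add: den1_def A_def)

lemma F0: "F 0 = R0 n p b d Phi lam phi mu alpha beta gamma omega delta"
  unfolding F_def R0_def K_def
proof (intro arg_cong[where f="\<lambda>x. _ * x"] sum.cong refl)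
  fix k
  have "(d + alpha + omega) * d + (d + alpha) * mu k = Dk 0 k" unfolding Dk0 by (simp add: algebra_simps)
  thus "phi k * p k * lam k * hf 0 k / xi =
         phi k * p k * lam k * (Lam b d Phi k * (d + omega + alpha + delta * mu k)) /
         ((gamma + beta + d) * ((d + alpha + omega) * d + (d + alpha) * mu k))"
    unfolding hf_def xi_def L_def den1_def A_def by simp
qed

end
theorem theorem4p1:
  fixes n :: nat and p :: "nat \<Rightarrow> real" and b d Phi :: real
    and lam phi mu :: "nat \<Rightarrow> real"
    and alpha beta gamma eta omega delta :: real
  assumes hn: "n \<ge> 1"
    and hp: "\<forall>k\<in>{1..n}. p k > 0"
    and hpsum: "(\<Sum>k=1..n. p k) = 1"
    and hbd: "b > d" and hd: "d > 0"
    and hPhi: "Phi > 0"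
    and hPhieq: "Phi = (1 / kmean n p) *
                   (\<Sum>i=1..n. real i * p i * b * Phi / (d + b * real i * Phi))"
    and hlam: "\<forall>k\<in>{1..n}. lam k > 0"
    and hphi: "\<forall>k\<in>{1..n}. phi k > 0"
    and hmu: "\<forall>k\<in>{1..n}. mu k > 0"
    and halpha: "alpha > 0" and hbeta: "beta > 0" and hgamma: "gamma > 0"
    and heta: "eta > 0" and homega: "omega > 0"
    and hdelta: "0 \<le> delta" "delta \<le> 1"
  shows
    \<comment> \<open>E^0 is an equilibrium\<close>
    "sviqr_equilibrium n p b d Phi lam phi mu alpha beta gamma eta omega delta
        (S0 b d Phi mu alpha omega) (V0 b d Phi mu alpha omega) (\<lambda>k. 0) (\<lambda>k. 0)
        (R0comp b d Phi mu alpha omega)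
     \<and> \<comment> \<open>E^0 is the only equilibrium with Theta = 0\<close>
     (\<forall>S V I Q R.
        sviqr_equilibrium n p b d Phi lam phi mu alpha beta gamma eta omega delta S V I Q R
        \<and> Theta n p phi I = 0 \<longrightarrow>
        (\<forall>k\<in>{1..n}. S k = S0 b d Phi mu alpha omega k \<and> V k = V0 b d Phi mu alpha omega k
                     \<and> I k = 0 \<and> Q k = 0 \<and> R k = R0comp b d Phi mu alpha omega k))
     \<and> \<comment> \<open>existence of a nonnegative endemic equilibrium iff R_0 > 1\<close>
     ((\<exists>S V I Q R.
        sviqr_equilibrium n p b d Phi lam phi mu alpha beta gamma eta omega delta S V I Q R
        \<and> (\<forall>k\<in>{1..n}. S k \<ge> 0 \<and> V k \<ge> 0 \<and> I k \<ge> 0 \<and> Q k \<ge> 0 \<and> R k \<ge> 0)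
        \<and> Theta n p phi I > 0)
      \<longleftrightarrow> R0 n p b d Phi lam phi mu alpha beta gamma omega delta > 1)
     \<and> \<comment> \<open>in that case it is unique and has I_k > 0 for all k\<close>
     (R0 n p b d Phi lam phi mu alpha beta gamma omega delta > 1 \<longrightarrow>
      (\<exists>S V I Q R.
        sviqr_equilibrium n p b d Phi lam phi mu alpha beta gamma eta omega delta S V I Q R
        \<and> (\<forall>k\<in>{1..n}. S k \<ge> 0 \<and> V k \<ge> 0 \<and> I k > 0 \<and> Q k \<ge> 0 \<and> R k \<ge> 0)
        \<and> Theta n p phi I > 0
        \<and> (\<forall>S' V' I' Q' R'.
             sviqr_equilibrium n p b d Phi lam phi mu alpha beta gamma eta omega delta S' V' I' Q' R'
             \<and> (\<forall>k\<in>{1..n}. S' k \<ge> 0 \<and> V' k \<ge> 0 \<and> I' k \<ge> 0 \<and> Q' k \<ge> 0 \<and> R' k \<ge> 0)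
             \<and> Theta n p phi I' > 0 \<longrightarrow>
             (\<forall>k\<in>{1..n}. S' k = S k \<and> V' k = V k \<and> I' k = I k \<and> Q' k = Q k \<and> R' k = R k))))"
proof -
  interpret sv n p b d Phi lam phi mu alpha beta gamma eta omega delta
    by unfold_locales (use assms in auto)
  have P1: "sviqr_equilibrium n p b d Phi lam phi mu alpha beta gamma eta omega delta
        (S0 b d Phi mu alpha omega) (V0 b d Phi mu alpha omega) (\<lambda>k. 0) (\<lambda>k. 0)
        (R0comp b d Phi mu alpha omega)"
    using construct[of 0] at0 by simp
  have P2: "\<forall>S V I Q R.
        sviqr_equilibrium n p b d Phi lam phi mu alpha beta gamma eta omega delta S V I Q R
        \<and> Theta n p phi I = 0 \<longrightarrow>
        (\<forall>k\<in>{1..n}. S k = S0 b d Phi mu alpha omega k \<and> V k = V0 b d Phi mu alpha omega k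
                     \<and> I k = 0 \<and> Q k = 0 \<and> R k = R0comp b d Phi mu alpha omega k)"
    using eq_char[of _ _ _ _ _ 0] at0 by auto
  have P4: "R0 n p b d Phi lam phi mu alpha beta gamma omega delta > 1 \<longrightarrow>
      (\<exists>S V I Q R.
        sviqr_equilibrium n p b d Phi lam phi mu alpha beta gamma eta omega delta S V I Q R
        \<and> (\<forall>k\<in>{1..n}. S k \<ge> 0 \<and> V k \<ge> 0 \<and> I k > 0 \<and> Q k \<ge> 0 \<and> R k \<ge> 0)
        \<and> Theta n p phi I > 0
        \<and> (\<forall>S' V' I' Q' R'.
             sviqr_equilibrium n p b d Phi lam phi mu alpha beta gamma eta omega delta S' V' I' Q' R'
             \<and> (\<forall>k\<in>{1..n}. S' k \<ge> 0 \<and> V' k \<ge> 0 \<and> I' k \<ge> 0 \<and> Q' k \<ge> 0 \<and> R' k \<ge> 0)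
             \<and> Theta n p phi I' > 0 \<longrightarrow>
             (\<forall>k\<in>{1..n}. S' k = S k \<and> V' k = V k \<and> I' k = I k \<and> Q' k = Q k \<and> R' k = R k)))"
  proof
    assume "R0 n p b d Phi lam phi mu alpha beta gamma omega delta > 1"
    hence F0g: "F 0 > 1" using F0 by simp
    obtain T where T: "T > 0" "F T < 1" using F_small by blast
    obtain \<theta> where th: "0 \<le> \<theta>" "\<theta> \<le> T" "F \<theta> = 1"
      using IVT2[of F T 1 0] T F0g F_cont by force
    have thp: "\<theta> > 0" using th F0g by (cases "\<theta> = 0") auto
    have C: "sviqr_equilibrium n p b d Phi lam phi mu alpha beta gamma eta omega delta
         (Sf \<theta>) (Vf \<theta>) (If \<theta>) (Qf \<theta>) (Rf \<theta>) \<and> Theta n p phi (If \<theta>) = \<theta>"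
      using construct[of \<theta> "Sf \<theta>" "Vf \<theta>" "If \<theta>" "Qf \<theta>" "Rf \<theta>"] th by simp
    show "\<exists>S V I Q R.
        sviqr_equilibrium n p b d Phi lam phi mu alpha beta gamma eta omega delta S V I Q R
        \<and> (\<forall>k\<in>{1..n}. S k \<ge> 0 \<and> V k \<ge> 0 \<and> I k > 0 \<and> Q k \<ge> 0 \<and> R k \<ge> 0)
        \<and> Theta n p phi I > 0
        \<and> (\<forall>S' V' I' Q' R'.
             sviqr_equilibrium n p b d Phi lam phi mu alpha beta gamma eta omega delta S' V' I' Q' R'
             \<and> (\<forall>k\<in>{1..n}. S' k \<ge> 0 \<and> V' k \<ge> 0 \<and> I' k \<ge> 0 \<and> Q' k \<ge> 0 \<and> R' k \<ge> 0)
             \<and> Theta n p phi I' > 0 \<longrightarrow>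
             (\<forall>k\<in>{1..n}. S' k = S k \<and> V' k = V k \<and> I' k = I k \<and> Q' k = Q k \<and> R' k = R k))"
    proof (intro exI conjI allI impI)
      show "sviqr_equilibrium n p b d Phi lam phi mu alpha beta gamma eta omega delta
         (Sf \<theta>) (Vf \<theta>) (If \<theta>) (Qf \<theta>) (Rf \<theta>)" using C by simp
      show "\<forall>k\<in>{1..n}. Sf \<theta> k \<ge> 0 \<and> Vf \<theta> k \<ge> 0 \<and> If \<theta> k > 0 \<and> Qf \<theta> k \<ge> 0 \<and> Rf \<theta> k \<ge> 0"
        using nonneg th thp by auto
      show "Theta n p phi (If \<theta>) > 0" using C thp by simp
      fix S' V' I' Q' R'
      assume H: "sviqr_equilibrium n p b d Phi lam phi mu alpha beta gamma eta omega delta S' V' I' Q' R'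
             \<and> (\<forall>k\<in>{1..n}. S' k \<ge> 0 \<and> V' k \<ge> 0 \<and> I' k \<ge> 0 \<and> Q' k \<ge> 0 \<and> R' k \<ge> 0)
             \<and> Theta n p phi I' > 0"
      define \<theta>' where "\<theta>' = Theta n p phi I'"
      have "F \<theta>' = 1" using eq_F[of S' V' I' Q' R' \<theta>'] H \<theta>'_def by auto
      hence "\<theta>' = \<theta>" using F_inj[of \<theta>' \<theta>] th H \<theta>'_def by auto
      thus "\<forall>k\<in>{1..n}. S' k = Sf \<theta> k \<and> V' k = Vf \<theta> k \<and> I' k = If \<theta> k \<and> Q' k = Qf \<theta> k \<and> R' k = Rf \<theta> k"
        using eq_char[of S' V' I' Q' R' \<theta>'] H \<theta>'_def th by auto
    qed
  qed
  have P3: "(\<exists>S V I Q R.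
        sviqr_equilibrium n p b d Phi lam phi mu alpha beta gamma eta omega delta S V I Q R
        \<and> (\<forall>k\<in>{1..n}. S k \<ge> 0 \<and> V k \<ge> 0 \<and> I k \<ge> 0 \<and> Q k \<ge> 0 \<and> R k \<ge> 0)
        \<and> Theta n p phi I > 0)
      \<longleftrightarrow> R0 n p b d Phi lam phi mu alpha beta gamma omega delta > 1"
  proof
    assume "\<exists>S V I Q R.
        sviqr_equilibrium n p b d Phi lam phi mu alpha beta gamma eta omega delta S V I Q R
        \<and> (\<forall>k\<in>{1..n}. S k \<ge> 0 \<and> V k \<ge> 0 \<and> I k \<ge> 0 \<and> Q k \<ge> 0 \<and> R k \<ge> 0)
        \<and> Theta n p phi I > 0"
    then obtain S V I Q R where H: "sviqr_equilibrium n p b d Phi lam phi mu alpha beta gamma eta omega delta S V I Q R"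
      "Theta n p phi I > 0" by blast
    have "F (Theta n p phi I) = 1" using eq_F[OF H(1) refl H(2)] .
    moreover have "F (Theta n p phi I) < F 0" using F_decr[of 0] H(2) by simp
    ultimately show "R0 n p b d Phi lam phi mu alpha beta gamma omega delta > 1" using F0 by simp
  next
    assume "R0 n p b d Phi lam phi mu alpha beta gamma omega delta > 1"
    with P4 show "\<exists>S V I Q R.
        sviqr_equilibrium n p b d Phi lam phi mu alpha beta gamma eta omega delta S V I Q R
        \<and> (\<forall>k\<in>{1..n}. S k \<ge> 0 \<and> V k \<ge> 0 \<and> I k \<ge> 0 \<and> Q k \<ge> 0 \<and> R k \<ge> 0)
        \<and> Theta n p phi I > 0" by (meson less_imp_le)
  qed
  show ?thesis using P1 P2 P3 P4 by blast
qed

end
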